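(* Let $0<\alpha<1$, $\theta>0$, and let $\bar Z^{\alpha,\theta}(t)=(M_1(D_{\alpha,\theta}(t)),\dots,M_q(D_{\alpha,\theta}(t)))$. Its Lévy measure $\Pi^{\bar Z}$ is given, for $A_1,\dots,A_q\subseteq\mathbb{N}_0$, by $$\Pi^{\bar Z}(A_1\times\cdots\times A_q)=\frac{\alpha(\lambda+\theta)^\alpha}{\Gamma(1-\alpha)}\sum_{\bar n\succ\bar0}\ \sum_{\substack{\Omega(k_i,n_i)\\ i=1,\dots,q}}\Gamma\Big(\sum_{i=1}^q\sum_{j=1}^{k_i}n_{ij}-\alpha\Big)\prod_{i=1}^q\prod_{j=1}^{k_i}\frac{(\lambda_{ij}/(\lambda+\theta))^{n_{ij}}}{n_{ij}!}\,\mathbb{I}_{\{n_i\in A_i\}}.$$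
   Context: Fix $q\ge1$, integers $k_1,\dots,k_q\ge1$, $\lambda_{ij}>0$ ($1\le i\le q$, $1\le j\le k_i$), $\lambda=\sum_{i,j}\lambda_{ij}$. The MGCP $\bar M(t)=(M_1(t),\dots,M_q(t))$ is the $\mathbb{N}_0^q$-valued Lévy process with $\bar M(0)=\bar0$, independent components and $\Pr\{\bar M(t)=\bar n\}=\prod_{i=1}^q\sum_{\Omega(k_i,n_i)}\prod_{j=1}^{k_i}\frac{(\lambda_{ij}t)^{n_{ij}}}{n_{ij}!}e^{-\lambda_{ij}t}$. $\{D_{\alpha,\theta}(t)\}$ is a tempered $\alpha$-stable subordinator independent of $\bar M$: driftless, $\mathbb{E}e^{-sD_{\alpha,\theta}(t)}=e^{-t((s+\theta)^\alpha-\theta^\alpha)}$, Lévy measure $\frac{\alpha}{\Gamma(1-\alpha)}s^{-\alpha-1}e^{-\theta s}\,\mathrm{d}s$. $\Omega(k_i,n_i)=\{(n_{i1},\dots,n_{ik_i})\in\mathbb{N}_0^{k_i}:\sum_jjn_{ij}=n_i\}$; the inner sum runs over families $(n_{ij})$ with $(n_{i1},\dots,n_{ik_i})\in\Omega(k_i,n_i)$ for each $i$. $\bar n\succ\bar0$ means $\bar n\in\mathbb{N}_0^q\setminus\{\bar0\}$. *)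

theory Defs
  imports "HOL-Probability.Probability"
begin

text \<open>Points of N_0^q are encoded as functions nat => nat vanishing outside {1..q}.\<close>
definition lattice :: "nat \<Rightarrow> (nat \<Rightarrow> nat) set" where
  "lattice q = {n. \<forall>i. i \<notin> {1..q} \<longrightarrow> n i = 0}"

definition Omega :: "nat \<Rightarrow> nat \<Rightarrow> (nat \<Rightarrow> nat) set" where
  "Omega k m = {v. (\<forall>j. j \<notin> {1..k} \<longrightarrow> v j = 0) \<and> (\<Sum>j=1..k. j * v j) = m}"

definition OmegaFam :: "nat \<Rightarrow> (nat \<Rightarrow> nat) \<Rightarrow> (nat \<Rightarrow> nat) \<Rightarrow> (nat \<Rightarrow> nat \<Rightarrow> nat) set" where
  "OmegaFam q k n = {v. (\<forall>i. i \<notin> {1..q} \<longrightarrow> v i = (\<lambda>_. 0)) \<and> (\<forall>i\<in>{1..q}. v i \<in> Omega (k i) (n i))}"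

definition total_rate :: "nat \<Rightarrow> (nat \<Rightarrow> nat) \<Rightarrow> (nat \<Rightarrow> nat \<Rightarrow> real) \<Rightarrow> real" where
  "total_rate q k lam = (\<Sum>i=1..q. \<Sum>j=1..k i. lam i j)"

text \<open>Pr{ M(s) = n } for the MGCP (n in lattice q).\<close>
definition mgcp_pmf :: "nat \<Rightarrow> (nat \<Rightarrow> nat) \<Rightarrow> (nat \<Rightarrow> nat \<Rightarrow> real) \<Rightarrow> real \<Rightarrow> (nat \<Rightarrow> nat) \<Rightarrow> real" where
  "mgcp_pmf q k lam s n =
     (\<Prod>i=1..q. \<Sum>v\<in>Omega (k i) (n i).
        \<Prod>j=1..k i. (lam i j * s) ^ (v j) / fact (v j) * exp (- lam i j * s))"

text \<open>Pr{ M(D(t)) = n } where mu t is the law of D(t), independent of M.\<close>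
definition subord_pmf :: "nat \<Rightarrow> (nat \<Rightarrow> nat) \<Rightarrow> (nat \<Rightarrow> nat \<Rightarrow> real) \<Rightarrow> (real \<Rightarrow> real measure)
    \<Rightarrow> real \<Rightarrow> (nat \<Rightarrow> nat) \<Rightarrow> real" where
  "subord_pmf q k lam mu t n = (\<integral>x. mgcp_pmf q k lam x n \<partial>(mu t))"

text \<open>w is the Levy measure (given by its point masses on N_0^q minus 0) of the
  N_0^q-valued Levy process with marginal laws p t: Levy--Khintchine (Laplace) formula
  of a driftless process with nonnegative integer jumps.\<close>
definition is_levy_measure :: "nat \<Rightarrow> (real \<Rightarrow> (nat \<Rightarrow> nat) \<Rightarrow> real) \<Rightarrow> ((nat \<Rightarrow> nat) \<Rightarrow> real) \<Rightarrow> bool" where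
  "is_levy_measure q p w \<longleftrightarrow>
     (\<forall>n. 0 \<le> w n) \<and> (\<forall>n. w n \<noteq> 0 \<longrightarrow> n \<in> lattice q \<and> n \<noteq> (\<lambda>_. 0)) \<and>
     w summable_on UNIV \<and>
     (\<forall>t\<ge>0. \<forall>u::nat \<Rightarrow> real. (\<forall>i. 0 \<le> u i) \<longrightarrow>
        (\<Sum>\<^sub>\<infinity>n\<in>lattice q. p t n * exp (- (\<Sum>i=1..q. u i * real (n i)))) =
        exp (- t * (\<Sum>\<^sub>\<infinity>n. (1 - exp (- (\<Sum>i=1..q. u i * real (n i)))) * w n)))"

end

theory Submission
  imports Defs
begin


lemma has_sum_fibers:
  fixes g :: "'a \<Rightarrow> real"
  assumes "(g has_sum S) A" "\<And>x. x\<in>A \<Longrightarrow> h x \<in> B" "\<And>y. y\<in>B \<Longrightarrow> finite {x\<in>A. h x = y}"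
  shows "((\<lambda>y. \<Sum>x\<in>{x\<in>A. h x = y}. g x) has_sum S) B"
proof -
  have bij: "bij_betw (\<lambda>x. (h x, x)) A (Sigma B (\<lambda>y. {x\<in>A. h x = y}))"
    using assms(2) by (auto simp: bij_betw_def inj_on_def)
  have "((\<lambda>x. (\<lambda>(y,x). g x) (h x, x)) has_sum S) A" using assms(1) by simp
  hence "((\<lambda>(y,x). g x) has_sum S) (Sigma B (\<lambda>y. {x\<in>A. h x = y}))"
    using has_sum_reindex_bij_betw[OF bij] by blast
  thus ?thesis
    by (rule has_sum_SigmaD) (auto intro!: has_sum_finiteI assms(3))
qed

lemma has_sum_from_fibers:
  fixes g :: "'a \<Rightarrow> real"
  assumes "((\<lambda>y. \<Sum>x\<in>{x\<in>A. h x = y}. g x) has_sum S) B" "\<And>x. x\<in>A \<Longrightarrow> h x \<in> B"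
    "\<And>y. y\<in>B \<Longrightarrow> finite {x\<in>A. h x = y}" "\<And>x. x\<in>A \<Longrightarrow> g x \<ge> 0"
  shows "(g has_sum S) A"
proof -
  have bij: "bij_betw (\<lambda>x. (h x, x)) A (Sigma B (\<lambda>y. {x\<in>A. h x = y}))"
    using assms(2) by (auto simp: bij_betw_def inj_on_def)
  have inner: "\<And>y. y \<in> B \<Longrightarrow> ((\<lambda>x. (\<lambda>(y,x). g x) (y, x)) has_sum (\<Sum>x\<in>{x\<in>A. h x = y}. g x)) {x\<in>A. h x = y}"
    by (auto intro!: has_sum_finiteI assms(3))
  have sm: "(\<lambda>(y,x). g x) summable_on (Sigma B (\<lambda>y. {x\<in>A. h x = y}))"
    by (rule summable_on_SigmaI[OF inner]) (use assms in \<open>auto simp: summable_on_def\<close>)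
  have "((\<lambda>(y,x). g x) has_sum S) (Sigma B (\<lambda>y. {x\<in>A. h x = y}))"
    by (rule has_sum_SigmaI[OF inner assms(1) sm])
  hence "((\<lambda>x. (\<lambda>(y,x). g x) (h x, x)) has_sum S) A"
    using has_sum_reindex_bij_betw[OF bij] by blast
  thus ?thesis by simp
qed

lemma has_sum_prod_PiE_nonneg:
  fixes f :: "'a \<Rightarrow> 'b \<Rightarrow> real"
  assumes "finite A" "\<And>x. x\<in>A \<Longrightarrow> (f x has_sum s x) (B x)" "\<And>x y. x\<in>A \<Longrightarrow> y\<in>B x \<Longrightarrow> f x y \<ge> 0"
  shows "((\<lambda>g. \<Prod>x\<in>A. f x (g x)) has_sum (\<Prod>x\<in>A. s x)) (PiE A B)"
  using assms
proof (induction A rule: finite_induct)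
  case empty
  then show ?case by (simp add: has_sum_finiteI)
next
  case (insert a A)
  let ?P = "\<lambda>g. \<Prod>x\<in>A. f x (g x)"
  have IH: "(?P has_sum (\<Prod>x\<in>A. s x)) (PiE A B)" using insert by auto
  have Pnn: "?P g \<ge> 0" if "g \<in> PiE A B" for g using insert.prems(2) that by (auto intro!: prod_nonneg)
  have inner: "((\<lambda>y. (\<lambda>(g,y). f a y * ?P g) (g, y)) has_sum (s a * ?P g)) (B a)" if "g \<in> PiE A B" for g
    using has_sum_cmult_left[OF insert.prems(1)[of a], of "?P g"] by (simp add: mult.commute)
  have outer: "((\<lambda>g. s a * ?P g) has_sum (s a * (\<Prod>x\<in>A. s x))) (PiE A B)"
    using has_sum_cmult_right[OF IH] by simp
  have sm: "(\<lambda>(g,y). f a y * ?P g) summable_on (Sigma (PiE A B) (\<lambda>_. B a))"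
    by (rule summable_on_SigmaI[OF inner]) (use outer Pnn insert.prems(2) in \<open>auto simp: summable_on_def\<close>)
  have hs: "((\<lambda>(g,y). f a y * ?P g) has_sum (s a * (\<Prod>x\<in>A. s x))) (PiE A B \<times> B a)"
    using has_sum_SigmaI[OF inner outer sm] by simp
  have inj: "inj_on (\<lambda>(g, y). g(a := y)) (PiE A B \<times> B a)"
    by (rule inj_combinator'[OF insert.hyps(2)])
  have img: "PiE (insert a A) B = (\<lambda>(g,y). g(a:=y)) ` (PiE A B \<times> B a)"
    unfolding PiE_insert_eq
    by (subst swap_product [symmetric]) (simp add: image_image case_prod_unfold)
  have eq: "(\<lambda>g. \<Prod>x\<in>insert a A. f x (g x)) \<circ> (\<lambda>(g,y). g(a:=y)) = (\<lambda>(g,y). f a y * ?P g)"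
  proof -
    have "(\<Prod>x\<in>A. f x ((g(a:=y)) x)) = ?P g" for g y
      using insert.hyps by (intro prod.cong) auto
    thus ?thesis using insert.hyps by (auto simp: fun_eq_iff)
  qed
  have "((\<lambda>g. \<Prod>x\<in>insert a A. f x (g x)) has_sum (s a * (\<Prod>x\<in>A. s x))) (PiE (insert a A) B)"
    unfolding img using has_sum_reindex[OF inj, of "\<lambda>g. \<Prod>x\<in>insert a A. f x (g x)"] hs eq by simp
  thus ?case using insert.hyps by simp
qed



lemma powser_zero_unique:
  fixes c :: "nat \<Rightarrow> real"
  assumes H: "\<And>x. 0 < x \<Longrightarrow> x < 1 \<Longrightarrow> (\<lambda>m. c m * x^m) sums 0"
  shows "c m = 0"
proof (induction m rule: less_induct)
  case (less m)
  have sh: "(\<lambda>i. c (i+m) * x^i) sums 0" if x: "0 < x" "x < 1" for x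
  proof -
    have "(\<Sum>i<m. c i * x^i) = 0" using less by simp
    hence "(\<lambda>i. c (i+m) * x^(i+m)) sums 0"
      using sums_iff_shift[of "\<lambda>m. c m * x^m" m 0] H[OF x] by simp
    hence "(\<lambda>i. c (i+m) * x^(i+m) / x^m) sums (0 / x^m)" by (rule sums_divide)
    moreover have "c (i+m) * x^(i+m) / x^m = c (i+m) * x^i" for i
      using x by (simp add: power_add)
    ultimately show ?thesis by simp
  qed
  define P where "P y = (\<Sum>i. c (i+m) * y^i)" for y :: real
  have "summable (\<lambda>i. c (i+m) * (1/2::real)^i)" using sh[of "1/2"] sums_summable by auto
  hence cont: "isCont P 0" unfolding P_def by (rule isCont_powser) simp
  have P0: "P 0 = c m" unfolding P_def using powser_zero[of "\<lambda>i. c (i+m)"] by simp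
  have "(P \<longlongrightarrow> P 0) (at_right 0)"
    using cont unfolding isCont_def by (rule tendsto_within_subset) simp
  moreover have "(P \<longlongrightarrow> 0) (at_right 0)"
  proof (rule tendsto_eventually)
    show "\<forall>\<^sub>F y in at_right 0. P y = 0"
      using eventually_at_right_real[of 0 "1::real"] zero_less_one
      by (auto elim!: eventually_mono) (auto simp: P_def intro!: sums_unique[symmetric] sh)
  qed
  ultimately have "P 0 = 0" using tendsto_unique[OF trivial_limit_at_right_real] by blast
  thus ?case using P0 by simp
qed

definition Lset :: "nat set \<Rightarrow> (nat \<Rightarrow> nat) set" where
  "Lset I = {n. \<forall>i. i \<notin> I \<longrightarrow> n i = 0}"

lemma mv_unique:
  fixes d :: "(nat\<Rightarrow>nat) \<Rightarrow> real"
  assumes "finite I" "d summable_on Lset I"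
    "\<And>z. (\<forall>i\<in>I. 0 < z i \<and> z i < 1) \<Longrightarrow> (\<Sum>\<^sub>\<infinity>n\<in>Lset I. d n * (\<Prod>i\<in>I. z i ^ n i)) = 0"
  shows "\<forall>n\<in>Lset I. d n = 0"
  using assms(1,2,3)
proof (induction I arbitrary: d rule: finite_induct)
  case empty
  have L: "Lset {} = {\<lambda>_. 0}" by (auto simp: Lset_def)
  from empty.prems(2)[of "\<lambda>_. 0"] show ?case by (simp add: L)
next
  case (insert a I)
  let ?h = "\<lambda>(m::nat, n'::nat\<Rightarrow>nat). n'(a:=m)"
  have bij: "bij_betw ?h (UNIV \<times> Lset I) (Lset (insert a I))"
  proof (rule bij_betwI[where g="\<lambda>n. (n a, n(a:=0))"])
    show "?h \<in> UNIV \<times> Lset I \<rightarrow> Lset (insert a I)" by (auto simp: Lset_def)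
    show "(\<lambda>n. (n a, n(a:=0))) \<in> Lset (insert a I) \<rightarrow> UNIV \<times> Lset I" by (auto simp: Lset_def)
    show "(\<lambda>n. (n a, n(a:=0))) (?h x) = x" if "x \<in> UNIV \<times> Lset I" for x
      using that insert.hyps by (auto simp: Lset_def fun_eq_iff)
    show "?h (n a, n(a:=0)) = n" for n by auto
  qed
  have dabs: "(\<lambda>n. norm (d n)) summable_on Lset (insert a I)"
    using insert.prems(1) summable_on_iff_abs_summable_on_real by blast
  have step: "\<forall>n'\<in>Lset I. d (n'(a:=m)) = 0" for m
  proof (rule insert.IH)
    have inj: "inj_on (\<lambda>n'. n'(a:=m)) (Lset I)"
      using insert.hyps by (auto simp: inj_on_def Lset_def fun_eq_iff) (metis)
    have sub: "(\<lambda>n'. n'(a:=m)) ` Lset I \<subseteq> Lset (insert a I)" by (auto simp: Lset_def)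
    have "d summable_on (\<lambda>n'. n'(a:=m)) ` Lset I"
      using summable_on_subset[OF insert.prems(1) sub] .
    thus "(\<lambda>n'. d (n'(a:=m))) summable_on Lset I"
      using summable_on_reindex[OF inj, of d] by (simp add: o_def)
    fix z :: "nat \<Rightarrow> real" assume z: "\<forall>i\<in>I. 0 < z i \<and> z i < 1"
    define c where "c m = (\<Sum>\<^sub>\<infinity>n'\<in>Lset I. d (n'(a:=m)) * (\<Prod>i\<in>I. z i ^ n' i))" for m
    have "(\<lambda>m. c m * x^m) sums 0" if x: "0 < x" "x < 1" for x
    proof -
      define z' where "z' = z(a:=x)"
      have z': "\<forall>i\<in>insert a I. 0 < z' i \<and> z' i < 1" using z x by (auto simp: z'_def)
      define F where "F n = d n * (\<Prod>i\<in>insert a I. z' i ^ n i)" for n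
      have Fabs: "(\<lambda>n. norm (F n)) summable_on Lset (insert a I)"
      proof (rule Infinite_Sum.abs_summable_on_comparison_test'[OF dabs])
        fix n assume "n \<in> Lset (insert a I)"
        have "\<bar>\<Prod>i\<in>insert a I. z' i ^ n i\<bar> \<le> 1"
          using z' by (auto simp: abs_prod power_abs intro!: prod_le_1 power_le_one)
        thus "norm (F n) \<le> norm (d n)"
          by (auto simp: F_def abs_mult intro: mult_left_le)
      qed
      hence Fs: "F summable_on Lset (insert a I)"
        using summable_on_iff_abs_summable_on_real by blast
      have FH: "(F \<circ> ?h) = (\<lambda>(m,n'). x^m * (d (n'(a:=m)) * (\<Prod>i\<in>I. z i ^ n' i)))"
      proof -
        have "(\<Prod>i\<in>I. z' i ^ (n'(a:=m)) i) = (\<Prod>i\<in>I. z i ^ n' i)" for m n'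
          using insert.hyps by (intro prod.cong) (auto simp: z'_def)
        thus ?thesis using insert.hyps by (auto simp: fun_eq_iff F_def z'_def)
      qed
      have "(F \<circ> ?h) summable_on (UNIV \<times> Lset I)"
        using Fs summable_on_reindex_bij_betw[OF bij, of F] by (simp add: o_def)
      hence S2: "(\<lambda>(m,n'). x^m * (d (n'(a:=m)) * (\<Prod>i\<in>I. z i ^ n' i))) summable_on (UNIV \<times> Lset I)"
        using FH by simp
      have "(\<Sum>\<^sub>\<infinity>n\<in>Lset (insert a I). F n) = 0"
        using insert.prems(2)[OF z'] by (simp add: F_def)
      moreover have "(\<Sum>\<^sub>\<infinity>n\<in>Lset (insert a I). F n) = (\<Sum>\<^sub>\<infinity>p\<in>UNIV \<times> Lset I. (F \<circ> ?h) p)"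
        using infsum_reindex_bij_betw[OF bij, of F] by (simp add: o_def)
      moreover have "(\<Sum>\<^sub>\<infinity>p\<in>UNIV \<times> Lset I. (F \<circ> ?h) p) =
          (\<Sum>\<^sub>\<infinity>m. \<Sum>\<^sub>\<infinity>n'\<in>Lset I. x^m * (d (n'(a:=m)) * (\<Prod>i\<in>I. z i ^ n' i)))"
        unfolding FH using infsum_Sigma'_banach[OF S2] by simp
      moreover have "(\<lambda>m. \<Sum>\<^sub>\<infinity>n'\<in>Lset I. x^m * (d (n'(a:=m)) * (\<Prod>i\<in>I. z i ^ n' i))) = (\<lambda>m. c m * x^m)"
        by (auto simp: c_def infsum_cmult_right' mult.commute)
      moreover have "(\<lambda>m. \<Sum>\<^sub>\<infinity>n'\<in>Lset I. x^m * (d (n'(a:=m)) * (\<Prod>i\<in>I. z i ^ n' i))) summable_on UNIV"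
        using summable_on_Sigma_banach[OF S2] by simp
      ultimately have "((\<lambda>m. c m * x^m) has_sum 0) UNIV"
        by (metis has_sum_infsum)
      thus ?thesis by (rule has_sum_imp_sums)
    qed
    hence "c m = 0" by (rule powser_zero_unique)
    thus "(\<Sum>\<^sub>\<infinity>n'\<in>Lset I. d (n'(a:=m)) * (\<Prod>i\<in>I. z i ^ n' i)) = 0" by (simp add: c_def)
  qed
  show ?case
  proof
    fix n assume n: "n \<in> Lset (insert a I)"
    have "n(a:=0) \<in> Lset I" using n by (auto simp: Lset_def)
    from step[of "n a", rule_format, OF this] show "d n = 0" by simp
  qed
qed



lemma gamma_series:
  fixes \<alpha> x :: real
  assumes a: "0 < \<alpha>" "\<alpha> < 1" and x: "0 \<le> x" "x < 1"
  shows "(\<lambda>N. Gamma (real N - \<alpha>) * x^N / fact N) sums (Gamma (-\<alpha>) * (1-x) powr \<alpha>)"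
proof -
  have nint: "-\<alpha> \<notin> \<int>\<^sub>\<le>\<^sub>0"
  proof
    assume "-\<alpha> \<in> \<int>\<^sub>\<le>\<^sub>0"
    then obtain n :: int where "-\<alpha> = of_int n" by (auto elim!: nonpos_Ints_cases)
    moreover have "real_of_int n < real_of_int 0" "real_of_int (-1) < real_of_int n" using a calculation by auto
    hence "n < 0" "-1 < n" by (simp_all only: of_int_less_iff)
    thus False by linarith
  qed
  have "\<bar>-x\<bar> < 1" using x by simp
  from gen_binomial_real[OF this, of \<alpha>]
  have "(\<lambda>n. (\<alpha> gchoose n) * (-x)^n) sums (1 - x) powr \<alpha>" by simp
  hence "(\<lambda>n. Gamma (-\<alpha>) * ((\<alpha> gchoose n) * (-x)^n)) sums (Gamma (-\<alpha>) * (1 - x) powr \<alpha>)"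
    by (rule sums_mult)
  moreover have "Gamma (-\<alpha>) * ((\<alpha> gchoose n) * (-x)^n) = Gamma (real n - \<alpha>) * x^n / fact n" for n
  proof -
    have G0: "Gamma (-\<alpha>) \<noteq> 0" using nint by (simp add: Gamma_eq_zero_iff)
    have "(\<alpha> gchoose n) * (-x)^n = ((-1)^n * (-x)^n) * pochhammer (-\<alpha>) n / fact n"
      by (simp add: gbinomial_pochhammer)
    also have "(-1)^n * (-x)^n = x^n"
      by (simp flip: power_mult_distrib)
    also have "pochhammer (-\<alpha>) n = Gamma (-\<alpha> + real n) / Gamma (-\<alpha>)"
      using pochhammer_Gamma[OF nint] by simp
    finally show ?thesis using G0 by (simp add: field_simps)
  qed
  ultimately show ?thesis by simp
qed

definition famN :: "'a set \<Rightarrow> nat \<Rightarrow> ('a \<Rightarrow> nat) set" where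
  "famN P N = {f \<in> PiE P (\<lambda>_. UNIV). sum f P = N}"

lemma famN_finite:
  assumes "finite P" shows "finite (famN P N)"
proof (rule finite_subset)
  show "famN P N \<subseteq> PiE P (\<lambda>_. {0..N})"
    using assms by (auto simp: famN_def PiE_def Pi_def intro: member_le_sum)
  show "finite (PiE P (\<lambda>_. {0..N}))" using assms by (simp add: finite_PiE)
qed

lemma multinomial:
  fixes b :: "'a \<Rightarrow> real"
  assumes "finite P"
  shows "(\<Sum>f\<in>famN P N. \<Prod>p\<in>P. b p ^ f p / fact (f p)) = (sum b P)^N / fact N"
  using assms
proof (induction P arbitrary: N rule: finite_induct)
  case empty
  have e0: "famN {} 0 = {\<lambda>_. undefined}" and eS: "famN {} (Suc m) = {}" for m
    by (auto simp: famN_def)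
  show ?case by (cases N) (simp_all add: e0 eS)
next
  case (insert a P)
  let ?G = "\<lambda>P f. \<Prod>p\<in>P. b p ^ f p / fact (f p)"
  have "(\<Sum>f\<in>famN (insert a P) N. ?G (insert a P) f) =
        (\<Sum>(m,g)\<in>Sigma {..N} (\<lambda>m. famN P (N-m)). ?G (insert a P) (g(a:=m)))"
  proof (rule sum.reindex_bij_witness[where i="\<lambda>(m,g). g(a:=m)" and j="\<lambda>f. (f a, f(a:=undefined))"])
    fix f assume f: "f \<in> famN (insert a P) N"
    show "(\<lambda>(m,g). g(a:=m)) (f a, f(a:=undefined)) = f" by simp
    have s: "sum f (insert a P) = f a + sum f P" using insert.hyps by simp
    have "sum (f(a:=undefined)) P = sum f P" using insert.hyps by (intro sum.cong) auto
    thus "(f a, f(a:=undefined)) \<in> Sigma {..N} (\<lambda>m. famN P (N-m))"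
      using f s by (auto simp: famN_def PiE_def extensional_def)
  next
    fix p assume p: "p \<in> Sigma {..N} (\<lambda>m. famN P (N-m))"
    then obtain m g where pm: "p = (m,g)" "m \<le> N" "g \<in> famN P (N-m)" by auto
    have ga: "g a = undefined" using pm insert.hyps by (auto simp: famN_def PiE_def extensional_def)
    show "(\<lambda>f. (f a, f(a:=undefined))) ((\<lambda>(m,g). g(a:=m)) p) = p"
      using pm ga by (auto simp: fun_eq_iff)
    have "sum (g(a:=m)) P = sum g P" using insert.hyps by (intro sum.cong) auto
    thus "(\<lambda>(m,g). g(a:=m)) p \<in> famN (insert a P) N"
      using pm insert.hyps by (auto simp: famN_def PiE_def extensional_def)
  qed (auto intro!: prod.cong)
  also have "\<dots> = (\<Sum>(m,g)\<in>Sigma {..N} (\<lambda>m. famN P (N-m)). b a ^ m / fact m * ?G P g)"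
  proof (rule sum.cong)
    fix p assume "p \<in> Sigma {..N} (\<lambda>m. famN P (N-m))"
    obtain m g where "p = (m,g)" by force
    moreover have "?G P (g(a:=m)) = ?G P g" using insert.hyps by (intro prod.cong) auto
    ultimately show "(case p of (m,g) \<Rightarrow> ?G (insert a P) (g(a:=m))) =
        (case p of (m,g) \<Rightarrow> b a ^ m / fact m * ?G P g)"
      using insert.hyps by simp
  qed simp
  also have "\<dots> = (\<Sum>m\<le>N. b a ^ m / fact m * (\<Sum>g\<in>famN P (N-m). ?G P g))"
    by (subst sum.Sigma[symmetric]) (auto simp: famN_finite insert.hyps sum_distrib_left)
  also have "\<dots> = (\<Sum>m\<le>N. b a ^ m / fact m * ((sum b P)^(N-m) / fact (N-m)))"
    using insert.IH by simp
  also have "\<dots> = (\<Sum>m\<le>N. of_nat (N choose m) * b a ^ m * (sum b P)^(N-m)) / fact N"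
    by (simp add: sum_divide_distrib binomial_fact field_simps)
  also have "\<dots> = (b a + sum b P)^N / fact N" by (simp add: binomial_ring)
  finally show ?case using insert.hyps by simp
qed

lemma has_sum_integral_nonneg:
  fixes M :: "real measure" and g :: "'a \<Rightarrow> real \<Rightarrow> real" and G :: "real \<Rightarrow> real"
  assumes S: "countable S" "infinite S"
    and gi: "\<And>n. n\<in>S \<Longrightarrow> integrable M (g n)"
    and gnn: "\<And>n. n\<in>S \<Longrightarrow> AE x in M. 0 \<le> g n x"
    and hs: "AE x in M. ((\<lambda>n. g n x) has_sum G x) S"
    and Gi: "integrable M G"
  shows "((\<lambda>n. integral\<^sup>L M (g n)) has_sum integral\<^sup>L M G) S"
proof -
  define e where "e = from_nat_into S"
  have bij: "bij_betw e UNIV S" unfolding e_def using S by (rule bij_betw_from_nat_into)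
  have eS: "e i \<in> S" for i using bij by (auto simp: bij_betw_def)
  define h where "h i = g (e i)" for i
  have hi: "integrable M (h i)" for i using gi eS by (simp add: h_def)
  have hnn: "AE x in M. \<forall>i. 0 \<le> h i x" using gnn eS by (simp add: h_def AE_all_countable)
  have hsums: "AE x in M. (\<lambda>i. h i x) sums G x"
    using hs
  proof eventually_elim
    case (elim x)
    hence "((\<lambda>i. g (e i) x) has_sum G x) UNIV"
      using has_sum_reindex_bij_betw[OF bij, of "\<lambda>n. g n x"] by simp
    thus ?case unfolding h_def by (rule has_sum_imp_sums)
  qed
  have inorm: "integral\<^sup>L M (\<lambda>x. norm (h i x)) = integral\<^sup>L M (h i)" for i
    using hnn hi by (intro integral_cong_AE) (auto elim!: eventually_mono)
  have bnd: "(\<Sum>i<N. integral\<^sup>L M (h i)) \<le> integral\<^sup>L M G" for N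
  proof -
    have "(\<Sum>i<N. integral\<^sup>L M (h i)) = integral\<^sup>L M (\<lambda>x. \<Sum>i<N. h i x)"
      using hi by (simp add: integral_sum)
    also have "\<dots> \<le> integral\<^sup>L M G"
    proof (rule integral_mono_AE)
      show "integrable M (\<lambda>x. \<Sum>i<N. h i x)" using hi by simp
      show "integrable M G" by (rule Gi)
      show "AE x in M. (\<Sum>i<N. h i x) \<le> G x"
        using hnn hsums by eventually_elim (metis sums_iff sum_le_suminf finite_lessThan)
    qed
    finally show ?thesis .
  qed
  have inn: "0 \<le> integral\<^sup>L M (h i)" for i
    using hnn by (intro integral_nonneg_AE) (auto elim!: eventually_mono)
  have summ: "summable (\<lambda>i. integral\<^sup>L M (\<lambda>x. norm (h i x)))"
    unfolding inorm by (rule summableI_nonneg_bounded[OF inn bnd])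
  have asumm: "AE x in M. summable (\<lambda>i. norm (h i x))"
    using hnn hsums by eventually_elim (auto simp: sums_iff)
  have "(\<lambda>i. integral\<^sup>L M (h i)) sums (\<integral>x. (\<Sum>i. h i x) \<partial>M)"
    by (rule sums_integral[OF hi asumm summ])
  moreover have "(\<integral>x. (\<Sum>i. h i x) \<partial>M) = integral\<^sup>L M G"
  proof (rule integral_cong_AE)
    show "(\<lambda>x. \<Sum>i. h i x) \<in> borel_measurable M" using hi by measurable
    show "G \<in> borel_measurable M" using Gi by measurable
    show "AE x in M. (\<Sum>i. h i x) = G x" using hsums by eventually_elim (simp add: sums_unique[symmetric])
  qed
  ultimately have "(\<lambda>i. integral\<^sup>L M (h i)) sums integral\<^sup>L M G" by simp
  hence "((\<lambda>i. integral\<^sup>L M (h i)) has_sum integral\<^sup>L M G) UNIV"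
    using inn by (rule sums_nonneg_imp_has_sum)
  thus ?thesis
    using has_sum_reindex_bij_betw[OF bij, of "\<lambda>n. integral\<^sup>L M (g n)"] by (simp add: h_def)
qed



locale mgs =
  fixes q :: nat and k :: "nat \<Rightarrow> nat"
begin

definition "P = Sigma {1..q} (\<lambda>i. {1..k i})"
definition "Fam = PiE P (\<lambda>_. UNIV :: nat set)"
definition "toV f = (\<lambda>i j. if (i,j) \<in> P then f (i,j) else (0::nat))"
definition "nv f = (\<lambda>i. \<Sum>j=1..k i. j * toV f i j)"

lemma finP: "finite P" by (simp add: P_def)

lemma nv_lattice: "nv f \<in> lattice q"
  by (auto simp: lattice_def nv_def toV_def P_def)

lemma toV_Omega:
  assumes "f \<in> Fam" "nv f = n"
  shows "toV f \<in> OmegaFam q k n"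
proof -
  have "toV f i \<in> Omega (k i) (n i)" if "i\<in>{1..q}" for i
    using that unfolding Omega_def assms(2)[symmetric] nv_def by (auto simp: toV_def P_def)
  moreover have "toV f i = (\<lambda>_. 0)" if "i \<notin> {1..q}" for i
    using that by (auto simp: toV_def P_def)
  ultimately show ?thesis by (auto simp: OmegaFam_def)
qed

lemma bij_toV:
  assumes n: "n \<in> lattice q"
  shows "bij_betw toV {f\<in>Fam. nv f = n} (OmegaFam q k n)"
proof (rule bij_betwI[where g="\<lambda>v. restrict (\<lambda>p. v (fst p) (snd p)) P"])
  show "toV \<in> {f\<in>Fam. nv f = n} \<rightarrow> OmegaFam q k n" using toV_Omega by auto
  have vz: "v i j = 0" if "v \<in> OmegaFam q k n" "(i,j) \<notin> P" for v i j
    using that by (auto simp: OmegaFam_def Omega_def P_def)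
  have tv: "toV (restrict (\<lambda>p. v (fst p) (snd p)) P) = v" if "v \<in> OmegaFam q k n" for v
    using vz[OF that] by (auto simp: toV_def fun_eq_iff)
  show "(\<lambda>v. restrict (\<lambda>p. v (fst p) (snd p)) P) \<in> OmegaFam q k n \<rightarrow> {f\<in>Fam. nv f = n}"
  proof
    fix v assume v: "v \<in> OmegaFam q k n"
    have "nv (restrict (\<lambda>p. v (fst p) (snd p)) P) = n"
    proof
      fix i
      show "nv (restrict (\<lambda>p. v (fst p) (snd p)) P) i = n i"
      proof (cases "i \<in> {1..q}")
        case True
        then show ?thesis using v unfolding nv_def tv[OF v] by (auto simp: OmegaFam_def Omega_def)
      next
        case False
        then show ?thesis using n v unfolding nv_def tv[OF v] by (auto simp: OmegaFam_def lattice_def)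
      qed
    qed
    thus "restrict (\<lambda>p. v (fst p) (snd p)) P \<in> {f\<in>Fam. nv f = n}" by (auto simp: Fam_def)
  qed
  show "restrict (\<lambda>p. toV f (fst p) (snd p)) P = f" if "f \<in> {f\<in>Fam. nv f = n}" for f
    using that by (auto simp: Fam_def toV_def fun_eq_iff PiE_def extensional_def)
  show "toV (restrict (\<lambda>p. v (fst p) (snd p)) P) = v" if "v \<in> OmegaFam q k n" for v
    using tv[OF that] .
qed

lemma fiber_finite: "finite {f\<in>Fam. nv f = n}"
proof (rule finite_subset)
  show "{f\<in>Fam. nv f = n} \<subseteq> PiE P (\<lambda>p. {0..n (fst p)})"
  proof (clarsimp simp: Fam_def)
    fix f :: "nat \<times> nat \<Rightarrow> nat" assume f: "f \<in> PiE P (\<lambda>_. UNIV)"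
    show "f \<in> PiE P (\<lambda>p. {0..nv f (fst p)})"
    proof (auto simp: PiE_iff)
      fix i j assume ij: "(i,j) \<in> P"
      have "f (i,j) \<le> j * toV f i j" using ij by (auto simp: toV_def P_def)
      also have "\<dots> \<le> nv f i" unfolding nv_def
        by (rule member_le_sum[where f="\<lambda>j. j * toV f i j"]) (use ij in \<open>auto simp: P_def\<close>)
      finally show "f (i,j) \<le> nv f i" .
    next
      show "f \<in> extensional P" using f by (simp add: PiE_def)
    qed
  qed
  show "finite (PiE P (\<lambda>p. {0..n (fst p)}))" by (simp add: finite_PiE finP)
qed

lemma sum_toV:
  assumes "f \<in> Fam"
  shows "(\<Sum>i=1..q. \<Sum>j=1..k i. toV f i j) = sum f P"
proof -
  have "(\<Sum>i=1..q. \<Sum>j=1..k i. toV f i j) = (\<Sum>p\<in>P. toV f (fst p) (snd p))"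
    unfolding P_def by (simp add: sum.Sigma split_def)
  also have "\<dots> = sum f P" by (intro sum.cong) (auto simp: toV_def)
  finally show ?thesis .
qed

lemma prod_toV:
  assumes "f \<in> Fam"
  shows "(\<Prod>i=1..q. \<Prod>j=1..k i. G i j (toV f i j)) = (\<Prod>p\<in>P. G (fst p) (snd p) (f p))"
proof -
  have "(\<Prod>i=1..q. \<Prod>j=1..k i. G i j (toV f i j)) = (\<Prod>p\<in>P. G (fst p) (snd p) (toV f (fst p) (snd p)))"
    unfolding P_def by (simp add: prod.Sigma split_def)
  also have "\<dots> = (\<Prod>p\<in>P. G (fst p) (snd p) (f p))" by (intro prod.cong) (auto simp: toV_def)
  finally show ?thesis .
qed

lemma nv_zero_iff:
  assumes "f \<in> Fam"
  shows "nv f = (\<lambda>_. 0) \<longleftrightarrow> sum f P = 0"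
proof -
  have "nv f = (\<lambda>_. 0) \<longleftrightarrow> (\<forall>i\<in>{1..q}. \<forall>j\<in>{1..k i}. toV f i j = 0)"
    by (auto simp: nv_def fun_eq_iff toV_def P_def)
  also have "\<dots> \<longleftrightarrow> (\<forall>p\<in>P. f p = 0)" by (auto simp: toV_def P_def)
  also have "\<dots> \<longleftrightarrow> sum f P = 0" by (simp add: finP)
  finally show ?thesis .
qed

lemma exp_nv:
  assumes "f \<in> Fam"
  shows "exp (- (\<Sum>i=1..q. u i * real (nv f i))) = (\<Prod>p\<in>P. exp (- (real (snd p) * u (fst p))) ^ f p)"
proof -
  have "(\<Sum>i=1..q. u i * real (nv f i)) = (\<Sum>i=1..q. \<Sum>j=1..k i. real j * u i * real (toV f i j))"
    by (simp add: nv_def sum_distrib_left mult_ac)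
  also have "\<dots> = (\<Sum>p\<in>P. real (snd p) * u (fst p) * real (toV f (fst p) (snd p)))"
    unfolding P_def by (simp add: sum.Sigma split_def)
  also have "\<dots> = (\<Sum>p\<in>P. real (snd p) * u (fst p) * real (f p))"
    by (intro sum.cong) (auto simp: toV_def)
  finally have "exp (- (\<Sum>i=1..q. u i * real (nv f i))) = (\<Prod>p\<in>P. exp (- (real (snd p) * u (fst p) * real (f p))))"
    by (simp add: exp_sum finP flip: sum_negf)
  also have "\<dots> = (\<Prod>p\<in>P. exp (- (real (snd p) * u (fst p))) ^ f p)"
    by (intro prod.cong refl) (simp add: exp_of_nat_mult[symmetric] mult_ac)
  finally show ?thesis .
qed

lemma Omega_finite: "finite (Omega kk m)"
proof (rule finite_subset)
  show "Omega kk m \<subseteq> {f. \<forall>x. (x \<in> {1..kk} \<longrightarrow> f x \<in> {0..m}) \<and> (x \<notin> {1..kk} \<longrightarrow> f x = 0)}"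
  proof
    fix v :: "nat \<Rightarrow> nat" assume "v \<in> Omega kk m"
    hence v0: "\<forall>j. j\<notin>{1..kk} \<longrightarrow> v j = 0" and vs: "(\<Sum>j=1..kk. j * v j) = m"
      by (auto simp: Omega_def)
    have "v x \<le> m" if x: "x \<in> {1..kk}" for x
    proof -
      have "v x \<le> x * v x" using x by simp
      also have "\<dots> \<le> (\<Sum>j=1..kk. j * v j)" by (rule member_le_sum) (use x in auto)
      finally show ?thesis using vs by simp
    qed
    thus "v \<in> {f. \<forall>x. (x \<in> {1..kk} \<longrightarrow> f x \<in> {0..m}) \<and> (x \<notin> {1..kk} \<longrightarrow> f x = 0)}"
      using v0 by auto
  qed
  show "finite {f. \<forall>x. (x \<in> {1..kk} \<longrightarrow> f x \<in> {0..m}) \<and> (x \<notin> {1..kk} \<longrightarrow> (f x::nat) = 0)}"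
    by (rule finite_set_of_finite_funs) auto
qed

lemma OmegaFam_sum:
  assumes n: "n \<in> lattice q"
  shows "(\<Sum>v\<in>OmegaFam q k n. H v) = (\<Sum>f\<in>{f\<in>Fam. nv f = n}. H (toV f))"
  using sum.reindex_bij_betw[OF bij_toV[OF n], of H] by simp

lemma mgcp_fiber:
  assumes n: "n \<in> lattice q"
  shows "mgcp_pmf q k lam x n =
    (\<Sum>f\<in>{f\<in>Fam. nv f = n}. \<Prod>p\<in>P. (lam (fst p) (snd p) * x) ^ f p / fact (f p) * exp (- lam (fst p) (snd p) * x))"
proof -
  define T where "T i j m = (lam i j * x) ^ m / fact m * exp (- lam i j * x)" for i j m
  have "mgcp_pmf q k lam x n = (\<Prod>i=1..q. \<Sum>v\<in>Omega (k i) (n i). \<Prod>j=1..k i. T i j (v j))"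
    by (simp add: mgcp_pmf_def T_def)
  also have "\<dots> = (\<Sum>V\<in>PiE {1..q} (\<lambda>i. Omega (k i) (n i)). \<Prod>i=1..q. \<Prod>j=1..k i. T i j (V i j))"
    by (rule prod_sum_PiE) (auto simp: Omega_finite)
  also have "\<dots> = (\<Sum>f\<in>{f\<in>Fam. nv f = n}. \<Prod>i=1..q. \<Prod>j=1..k i. T i j (toV f i j))"
  proof (rule sum.reindex_bij_witness[where j="\<lambda>V. restrict (\<lambda>p. V (fst p) (snd p)) P"
        and i="\<lambda>f. restrict (toV f) {1..q}"])
    fix V assume V: "V \<in> PiE {1..q} (\<lambda>i. Omega (k i) (n i))"
    have VO: "V i \<in> Omega (k i) (n i)" if "i \<in> {1..q}" for i using V that by auto
    have tv: "toV (restrict (\<lambda>p. V (fst p) (snd p)) P) i = V i" if "i \<in> {1..q}" for i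
      using VO[OF that] that by (auto simp: toV_def P_def Omega_def fun_eq_iff)
    show "restrict (toV (restrict (\<lambda>p. V (fst p) (snd p)) P)) {1..q} = V"
      using V tv by (auto simp: fun_eq_iff PiE_def extensional_def)
    have "nv (restrict (\<lambda>p. V (fst p) (snd p)) P) = n"
    proof
      fix i show "nv (restrict (\<lambda>p. V (fst p) (snd p)) P) i = n i"
      proof (cases "i \<in> {1..q}")
        case True
        then show ?thesis using VO[OF True] tv[OF True] by (simp add: nv_def Omega_def)
      next
        case False
        then show ?thesis using n by (auto simp: nv_def lattice_def toV_def P_def)
      qed
    qed
    thus "restrict (\<lambda>p. V (fst p) (snd p)) P \<in> {f\<in>Fam. nv f = n}" by (auto simp: Fam_def)
    show "(\<Prod>i=1..q. \<Prod>j=1..k i. T i j (toV (restrict (\<lambda>p. V (fst p) (snd p)) P) i j)) =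
          (\<Prod>i=1..q. \<Prod>j=1..k i. T i j (V i j))"
      using tv by simp
  next
    fix f assume f: "f \<in> {f\<in>Fam. nv f = n}"
    show "restrict (\<lambda>p. restrict (toV f) {1..q} (fst p) (snd p)) P = f"
      using f by (auto simp: fun_eq_iff Fam_def PiE_def extensional_def toV_def P_def)
    have "toV f \<in> OmegaFam q k n" using toV_Omega f by auto
    thus "restrict (toV f) {1..q} \<in> PiE {1..q} (\<lambda>i. Omega (k i) (n i))"
      by (auto simp: OmegaFam_def)
  qed
  also have "\<dots> = (\<Sum>f\<in>{f\<in>Fam. nv f = n}. \<Prod>p\<in>P. T (fst p) (snd p) (f p))"
    by (intro sum.cong refl prod_toV) auto
  finally show ?thesis by (simp add: T_def)
qed

end



context mgs begin

lemma fam_gamma: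
  fixes b :: "nat \<times> nat \<Rightarrow> real" and \<alpha> :: real
  assumes a: "0 < \<alpha>" "\<alpha> < 1" and b: "\<forall>p\<in>P. 0 \<le> b p" "sum b P < 1"
  shows "((\<lambda>f. Gamma (real (sum f P) - \<alpha>) * (\<Prod>p\<in>P. b p ^ f p / fact (f p)))
          has_sum (Gamma (-\<alpha>) * ((1 - sum b P) powr \<alpha> - 1))) {f\<in>Fam. sum f P \<noteq> 0}"
proof (rule has_sum_from_fibers[where h="\<lambda>f. sum f P" and B="{N. N \<noteq> 0}"])
  define B where "B = sum b P"
  have B0: "0 \<le> B" using b by (simp add: B_def sum_nonneg)
  define T where "T N = Gamma (real N - \<alpha>) * B^N / fact N" for N :: nat
  have fib: "{f\<in>{f\<in>Fam. sum f P \<noteq> 0}. sum f P = N} = famN P N" if "N \<noteq> 0" for N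
    using that by (auto simp: famN_def Fam_def)
  show "finite {f\<in>{f\<in>Fam. sum f P \<noteq> 0}. sum f P = N}" if "N \<in> {N. N \<noteq> 0}" for N
    using that fib famN_finite[OF finP] by simp
  show "sum f P \<in> {N. N \<noteq> 0}" if "f \<in> {f\<in>Fam. sum f P \<noteq> 0}" for f using that by simp
  show "0 \<le> Gamma (real (sum f P) - \<alpha>) * (\<Prod>p\<in>P. b p ^ f p / fact (f p))"
    if "f \<in> {f\<in>Fam. sum f P \<noteq> 0}" for f
  proof -
    have "sum f P \<ge> 1" using that by simp
    hence "real (sum f P) \<ge> 1" by (simp only: of_nat_le_iff[symmetric, of 1] of_nat_1)
    hence "Gamma (real (sum f P) - \<alpha>) > 0" using a by (intro Gamma_real_pos) simp
    moreover have "(\<Prod>p\<in>P. b p ^ f p / fact (f p)) \<ge> 0" using b by (intro prod_nonneg) auto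
    ultimately show ?thesis by simp
  qed
  have inner: "(\<Sum>f\<in>{f\<in>{f\<in>Fam. sum f P \<noteq> 0}. sum f P = N}. Gamma (real (sum f P) - \<alpha>) * (\<Prod>p\<in>P. b p ^ f p / fact (f p)))
      = T N" if "N \<noteq> 0" for N
  proof -
    have "(\<Sum>f\<in>{f\<in>{f\<in>Fam. sum f P \<noteq> 0}. sum f P = N}. Gamma (real (sum f P) - \<alpha>) * (\<Prod>p\<in>P. b p ^ f p / fact (f p)))
        = (\<Sum>f\<in>famN P N. Gamma (real N - \<alpha>) * (\<Prod>p\<in>P. b p ^ f p / fact (f p)))"
      unfolding fib[OF that] by (intro sum.cong) (auto simp: famN_def)
    also have "\<dots> = Gamma (real N - \<alpha>) * (B^N / fact N)"
      by (simp add: sum_distrib_left[symmetric] multinomial[OF finP] B_def)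
    finally show ?thesis by (simp add: T_def)
  qed
  have "T sums (Gamma (-\<alpha>) * (1 - B) powr \<alpha>)"
    unfolding T_def using gamma_series[OF a B0] b by (simp add: B_def)
  moreover have "\<forall>\<^sub>F N in sequentially. T N \<ge> 0"
  proof (rule eventually_sequentiallyI[of 1])
    fix N :: nat assume "N \<ge> 1"
    hence "Gamma (real N - \<alpha>) > 0" using a by (intro Gamma_real_pos) simp
    thus "T N \<ge> 0" using B0 by (simp add: T_def)
  qed
  ultimately have hU: "(T has_sum (Gamma (-\<alpha>) * (1 - B) powr \<alpha>)) UNIV"
    by (rule sums_nonneg_imp_has_sum_strong)
  have sm: "T summable_on {N. N \<noteq> 0}"
    using summable_on_subset[OF has_sum_imp_summable[OF hU]] by simp
  have "(T has_sum (T 0 + infsum T {N. N \<noteq> 0})) (insert 0 {N. N \<noteq> 0})"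
    by (rule has_sum_insert[OF _ has_sum_infsum[OF sm]]) simp
  moreover have "insert 0 {N::nat. N \<noteq> 0} = UNIV" by auto
  ultimately have "Gamma (-\<alpha>) * (1 - B) powr \<alpha> = T 0 + infsum T {N. N \<noteq> 0}"
    using hU has_sum_unique by metis
  hence "infsum T {N. N \<noteq> 0} = Gamma (-\<alpha>) * ((1 - B) powr \<alpha> - 1)"
    by (simp add: T_def algebra_simps)
  hence hT: "(T has_sum (Gamma (-\<alpha>) * ((1 - B) powr \<alpha> - 1))) {N. N \<noteq> 0}"
    using sm by (simp add: has_sum_iff)
  have eqT: "\<And>N. N \<in> {N. N \<noteq> 0} \<Longrightarrow> (\<Sum>f\<in>{f\<in>{f\<in>Fam. sum f P \<noteq> 0}. sum f P = N}. Gamma (real (sum f P) - \<alpha>) * (\<Prod>p\<in>P. b p ^ f p / fact (f p))) = T N"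
    by (rule inner) simp
  from has_sum_cong[of "{N. N \<noteq> 0}" _ T, OF eqT] hT B_def show "((\<lambda>N. \<Sum>f\<in>{f\<in>{f\<in>Fam. sum f P \<noteq> 0}. sum f P = N}. Gamma (real (sum f P) - \<alpha>) * (\<Prod>p\<in>P. b p ^ f p / fact (f p)))
      has_sum (Gamma (-\<alpha>) * ((1 - sum b P) powr \<alpha> - 1))) {N. N \<noteq> 0}"
    by (simp only:)
qed

lemma fam_exp:
  fixes z e :: "nat \<times> nat \<Rightarrow> real"
  assumes "\<forall>p\<in>P. 0 \<le> z p" "\<forall>p\<in>P. 0 \<le> e p"
  shows "((\<lambda>f. \<Prod>p\<in>P. z p ^ f p / fact (f p) * e p) has_sum (\<Prod>p\<in>P. exp (z p) * e p)) Fam"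
  unfolding Fam_def
proof (rule has_sum_prod_PiE_nonneg[OF finP])
  fix p assume p: "p \<in> P"
  have "(\<lambda>n. z p ^ n / fact n) sums exp (z p)"
    using exp_converges[of "z p"] by (simp add: scaleR_conv_of_real divide_inverse mult.commute)
  hence "(\<lambda>n. z p ^ n / fact n * e p) sums (exp (z p) * e p)" by (rule sums_mult2)
  thus "((\<lambda>n. z p ^ n / fact n * e p) has_sum (exp (z p) * e p)) UNIV"
    by (rule sums_nonneg_imp_has_sum) (use assms p in auto)
  show "\<And>y. y \<in> UNIV \<Longrightarrow> 0 \<le> z p ^ y / fact y * e p" using assms p by auto
qed

end


lemma neg_alpha_nonint:
  fixes \<alpha> :: real assumes a: "0 < \<alpha>" "\<alpha> < 1" shows "-\<alpha> \<notin> \<int>\<^sub>\<le>\<^sub>0"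
proof
  assume "-\<alpha> \<in> \<int>\<^sub>\<le>\<^sub>0"
  then obtain n :: int where "-\<alpha> = of_int n" by (auto elim!: nonpos_Ints_cases)
  moreover have "real_of_int n < real_of_int 0" "real_of_int (-1) < real_of_int n" using a calculation by auto
  hence "n < 0" "-1 < n" by (simp_all only: of_int_less_iff)
  thus False by linarith
qed

locale mgs2 = mgs +
  fixes lam :: "nat \<Rightarrow> nat \<Rightarrow> real" and \<alpha> \<theta> :: real
  assumes lampos: "\<forall>i\<in>{1..q}. \<forall>j\<in>{1..k i}. lam i j > 0"
    and a0: "0 < \<alpha>" and a1: "\<alpha> < 1" and th: "\<theta> > 0"
begin

definition "L = total_rate q k lam"
definition "c = L + \<theta>"
definition "K = \<alpha> * c powr \<alpha> / Gamma (1 - \<alpha>)"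
definition "lp p = lam (fst p) (snd p)"
definition "Sn n = (\<Sum>v\<in>OmegaFam q k n. Gamma (real (\<Sum>i=1..q. \<Sum>j=1..k i. v i j) - \<alpha>) *
             (\<Prod>i=1..q. \<Prod>j=1..k i. (lam i j / c) ^ (v i j) / fact (v i j)))"
definition "w0 n = (if n \<in> lattice q \<and> n \<noteq> (\<lambda>_. 0) then K * Sn n else 0)"
definition "y u p = exp (- (real (snd p) * u (fst p)))"
definition "phi u = (\<Sum>p\<in>P. lp p * (1 - y u p))"
definition "Eu u n = exp (- (\<Sum>i=1..q. u i * real (n i)))"
definition "Ta f = Gamma (real (sum f P) - \<alpha>) * (\<Prod>p\<in>P. (lp p / c) ^ f p / fact (f p))"

lemma lp_pos: "p \<in> P \<Longrightarrow> lp p > 0" using lampos by (auto simp: lp_def P_def)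
lemma L_P: "L = sum lp P"
  unfolding L_def total_rate_def P_def lp_def by (simp add: sum.Sigma split_def)
lemma L_nn: "L \<ge> 0" unfolding L_P by (rule sum_nonneg) (use lp_pos in force)
lemma c_pos: "c > 0" using L_nn th by (simp add: c_def)

lemma Sn_fiber: "n \<in> lattice q \<Longrightarrow> Sn n = (\<Sum>f\<in>{f\<in>Fam. nv f = n}. Ta f)"
  unfolding Sn_def OmegaFam_sum
proof (intro sum.cong refl)
  fix f assume "f \<in> {f\<in>Fam. nv f = n}"
  hence fF: "f \<in> Fam" by simp
  show "Gamma (real (\<Sum>i=1..q. \<Sum>j=1..k i. toV f i j) - \<alpha>) *
             (\<Prod>i=1..q. \<Prod>j=1..k i. (lam i j / c) ^ (toV f i j) / fact (toV f i j)) = Ta f"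
    using sum_toV[OF fF] prod_toV[OF fF, of "\<lambda>i j m. (lam i j / c)^m / fact m"]
    by (simp add: Ta_def lp_def del: of_nat_sum)
qed

lemma y_bounds: "(\<forall>i. 0 \<le> u i) \<Longrightarrow> 0 < y u p \<and> y u p \<le> 1"
  by (auto simp: y_def)

lemma phi_nn: "(\<forall>i. 0 \<le> u i) \<Longrightarrow> 0 \<le> phi u"
  unfolding phi_def
proof (rule sum_nonneg)
  fix p assume "\<forall>i. 0 \<le> u i" "p \<in> P"
  thus "0 \<le> lp p * (1 - y u p)" using y_bounds[of u p] lp_pos[of p] by simp
qed

lemma w0_Eu_has_sum:
  assumes u: "\<forall>i. 0 \<le> u i"
  shows "((\<lambda>n. Eu u n * w0 n) has_sum
           K * (Gamma (-\<alpha>) * ((1 - (\<Sum>p\<in>P. lp p / c * y u p)) powr \<alpha> - 1))) (lattice q - {\<lambda>_. 0})"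
proof -
  define b where "b p = lp p / c * y u p" for p
  have bnn: "\<forall>p\<in>P. 0 \<le> b p" using lp_pos y_bounds[OF u] c_pos
    by (auto simp: b_def intro!: mult_nonneg_nonneg divide_nonneg_pos less_imp_le)
  have "sum b P \<le> sum (\<lambda>p. lp p / c) P"
    unfolding b_def
  proof (rule sum_mono)
    fix p assume "p \<in> P"
    thus "lp p / c * y u p \<le> lp p / c" using lp_pos[of p] y_bounds[OF u, of p] c_pos
      by (intro mult_left_le) auto
  qed
  also have "\<dots> = L / c" by (simp add: L_P sum_divide_distrib)
  also have "\<dots> < 1" using c_pos th by (simp add: c_def)
  finally have b1: "sum b P < 1" .
  have hs: "((\<lambda>f. Gamma (real (sum f P) - \<alpha>) * (\<Prod>p\<in>P. b p ^ f p / fact (f p)))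
          has_sum (Gamma (-\<alpha>) * ((1 - sum b P) powr \<alpha> - 1))) {f\<in>Fam. sum f P \<noteq> 0}"
    by (rule fam_gamma[OF a0 a1 bnn b1])
  have Tb: "Gamma (real (sum f P) - \<alpha>) * (\<Prod>p\<in>P. b p ^ f p / fact (f p)) = Ta f * Eu u (nv f)"
    if "f \<in> Fam" for f
  proof -
    have "(\<Prod>p\<in>P. b p ^ f p / fact (f p)) = (\<Prod>p\<in>P. (lp p / c) ^ f p / fact (f p)) * (\<Prod>p\<in>P. y u p ^ f p)"
      by (simp add: b_def power_mult_distrib prod.distrib[symmetric] field_simps)
    thus ?thesis using exp_nv[OF that, of u] by (simp add: Ta_def Eu_def y_def)
  qed
  have hs2: "((\<lambda>n. \<Sum>f\<in>{f\<in>{f\<in>Fam. sum f P \<noteq> 0}. nv f = n}. Gamma (real (sum f P) - \<alpha>) * (\<Prod>p\<in>P. b p ^ f p / fact (f p)))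
      has_sum (Gamma (-\<alpha>) * ((1 - sum b P) powr \<alpha> - 1))) (lattice q - {\<lambda>_. 0})"
  proof (rule has_sum_fibers[OF hs])
    show "nv f \<in> lattice q - {\<lambda>_. 0}" if "f \<in> {f\<in>Fam. sum f P \<noteq> 0}" for f
      using that nv_lattice nv_zero_iff by auto
    show "finite {f\<in>{f\<in>Fam. sum f P \<noteq> 0}. nv f = n}" for n
      by (rule finite_subset[OF _ fiber_finite[of n]]) auto
  qed
  have eq: "(\<Sum>f\<in>{f\<in>{f\<in>Fam. sum f P \<noteq> 0}. nv f = n}. Gamma (real (sum f P) - \<alpha>) * (\<Prod>p\<in>P. b p ^ f p / fact (f p)))
      = Eu u n * Sn n" if n: "n \<in> lattice q - {\<lambda>_. 0}" for n
  proof -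
    have "{f\<in>{f\<in>Fam. sum f P \<noteq> 0}. nv f = n} = {f\<in>Fam. nv f = n}"
      using n nv_zero_iff by auto
    hence "(\<Sum>f\<in>{f\<in>{f\<in>Fam. sum f P \<noteq> 0}. nv f = n}. Gamma (real (sum f P) - \<alpha>) * (\<Prod>p\<in>P. b p ^ f p / fact (f p)))
        = (\<Sum>f\<in>{f\<in>Fam. nv f = n}. Eu u n * Ta f)"
      using Tb by (auto intro!: sum.cong simp: mult.commute)
    also have "\<dots> = Eu u n * Sn n" using n by (simp add: Sn_fiber sum_distrib_left)
    finally show ?thesis .
  qed
  have "((\<lambda>n. Eu u n * Sn n) has_sum (Gamma (-\<alpha>) * ((1 - sum b P) powr \<alpha> - 1))) (lattice q - {\<lambda>_. 0})"
    using hs2 by (rule has_sum_cong[THEN iffD1, rotated]) (erule eq)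
  hence "((\<lambda>n. K * (Eu u n * Sn n)) has_sum K * (Gamma (-\<alpha>) * ((1 - sum b P) powr \<alpha> - 1))) (lattice q - {\<lambda>_. 0})"
    by (rule has_sum_cmult_right)
  moreover have "K * (Eu u n * Sn n) = Eu u n * w0 n" if "n \<in> lattice q - {\<lambda>_. 0}" for n
    using that by (simp add: w0_def)
  ultimately show ?thesis
    using has_sum_cong[of "lattice q - {\<lambda>_. 0}" "\<lambda>n. K * (Eu u n * Sn n)" "\<lambda>n. Eu u n * w0 n"]
    by (simp add: b_def)
qed

lemma Eu0: "Eu (\<lambda>_. 0) n = 1" by (simp add: Eu_def)
lemma y0: "y (\<lambda>_. 0) p = 1" by (simp add: y_def)

lemma w0_has_sum: "(w0 has_sum K * (Gamma (-\<alpha>) * ((1 - L / c) powr \<alpha> - 1))) (lattice q - {\<lambda>_. 0})"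
  using w0_Eu_has_sum[of "\<lambda>_. 0"] by (simp add: Eu0 y0 L_P sum_divide_distrib)

lemma psi_has_sum:
  assumes u: "\<forall>i. 0 \<le> u i"
  shows "((\<lambda>n. (1 - Eu u n) * w0 n) has_sum ((phi u + \<theta>) powr \<alpha> - \<theta> powr \<alpha>)) UNIV"
proof -
  define B where "B = (\<Sum>p\<in>P. lp p / c * y u p)"
  have h2: "((\<lambda>n. -1 * (Eu u n * w0 n)) has_sum (-1) * (K * (Gamma (-\<alpha>) * ((1 - B) powr \<alpha> - 1)))) (lattice q - {\<lambda>_. 0})"
    using has_sum_cmult_right[OF w0_Eu_has_sum[OF u], of "-1"] by (simp add: B_def)
  have "((\<lambda>n. w0 n + -1 * (Eu u n * w0 n)) has_sum
      (K * (Gamma (-\<alpha>) * ((1 - L / c) powr \<alpha> - 1)) + (-1) * (K * (Gamma (-\<alpha>) * ((1 - B) powr \<alpha> - 1)))))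
      (lattice q - {\<lambda>_. 0})"
    by (rule has_sum_add[OF w0_has_sum h2])
  moreover have "K * (Gamma (-\<alpha>) * ((1 - L / c) powr \<alpha> - 1)) + (-1) * (K * (Gamma (-\<alpha>) * ((1 - B) powr \<alpha> - 1)))
      = (phi u + \<theta>) powr \<alpha> - \<theta> powr \<alpha>"
  proof -
    have nint: "-\<alpha> \<notin> \<int>\<^sub>\<le>\<^sub>0" by (rule neg_alpha_nonint[OF a0 a1])
    have G1: "Gamma (1 - \<alpha>) = - \<alpha> * Gamma (-\<alpha>)"
      using Gamma_plus1[OF nint] by (simp add: add.commute)
    have Gn0: "Gamma (-\<alpha>) \<noteq> 0" using nint by (simp add: Gamma_eq_zero_iff)
    have KG: "K * Gamma (-\<alpha>) = - (c powr \<alpha>)"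
      unfolding K_def G1 using a0 Gn0 by (simp add: field_simps)
    have e1: "1 - L / c = \<theta> / c" using c_pos by (simp add: c_def field_simps)
    have "B = (\<Sum>p\<in>P. lp p * y u p) / c" by (simp add: B_def sum_divide_distrib)
    moreover have "(\<Sum>p\<in>P. lp p * y u p) = L - phi u"
      by (simp add: phi_def L_P algebra_simps sum_subtractf)
    ultimately have e2: "1 - B = (phi u + \<theta>) / c" using c_pos by (simp add: c_def field_simps)
    have "K * (Gamma (-\<alpha>) * ((1 - L / c) powr \<alpha> - 1)) + (-1) * (K * (Gamma (-\<alpha>) * ((1 - B) powr \<alpha> - 1)))
        = (K * Gamma (-\<alpha>)) * ((\<theta> / c) powr \<alpha> - ((phi u + \<theta>) / c) powr \<alpha>)"
      unfolding e1 e2 by (simp add: algebra_simps)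
    also have "\<dots> = (phi u + \<theta>) powr \<alpha> - \<theta> powr \<alpha>"
      unfolding KG powr_divide using c_pos by (simp add: field_simps)
    finally show ?thesis .
  qed
  ultimately have "((\<lambda>n. w0 n + -1 * (Eu u n * w0 n)) has_sum ((phi u + \<theta>) powr \<alpha> - \<theta> powr \<alpha>)) (lattice q - {\<lambda>_. 0})"
    by (simp only:)
  moreover have "(\<lambda>n. w0 n + -1 * (Eu u n * w0 n)) = (\<lambda>n. (1 - Eu u n) * w0 n)"
    by (auto simp: fun_eq_iff algebra_simps)
  ultimately have "((\<lambda>n. (1 - Eu u n) * w0 n) has_sum ((phi u + \<theta>) powr \<alpha> - \<theta> powr \<alpha>)) (lattice q - {\<lambda>_. 0})"
    by (simp only:)
  thus ?thesis
    by (rule has_sum_cong_neutral[THEN iffD1, rotated -1]) (auto simp: w0_def)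
qed

end


context mgs2 begin

lemma mgcp_Eu_has_sum:
  assumes u: "\<forall>i. 0 \<le> u i" and x: "0 \<le> x"
  shows "((\<lambda>n. mgcp_pmf q k lam x n * Eu u n) has_sum exp (- phi u * x)) (lattice q)"
proof -
  define z where "z p = lp p * x * y u p" for p
  define e where "e p = exp (- lp p * x)" for p
  have zn: "\<forall>p\<in>P. 0 \<le> z p"
  proof
    fix p assume "p \<in> P"
    hence "0 < lp p" "0 < y u p" using lp_pos y_bounds[OF u] by auto
    thus "0 \<le> z p" using x by (simp add: z_def)
  qed
  have en: "\<forall>p\<in>P. 0 \<le> e p" by (simp add: e_def)
  have hs2: "((\<lambda>n. \<Sum>f\<in>{f\<in>Fam. nv f = n}. \<Prod>p\<in>P. z p ^ f p / fact (f p) * e p)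
      has_sum (\<Prod>p\<in>P. exp (z p) * e p)) (lattice q)"
    by (rule has_sum_fibers[OF fam_exp[OF zn en]]) (auto simp: nv_lattice fiber_finite)
  have eq: "(\<Sum>f\<in>{f\<in>Fam. nv f = n}. \<Prod>p\<in>P. z p ^ f p / fact (f p) * e p) = mgcp_pmf q k lam x n * Eu u n"
    if n: "n \<in> lattice q" for n
  proof -
    have "(\<Sum>f\<in>{f\<in>Fam. nv f = n}. \<Prod>p\<in>P. z p ^ f p / fact (f p) * e p) =
          (\<Sum>f\<in>{f\<in>Fam. nv f = n}. (\<Prod>p\<in>P. (lam (fst p) (snd p) * x) ^ f p / fact (f p) * exp (- lam (fst p) (snd p) * x)) * Eu u n)"
    proof (intro sum.cong refl)
      fix f assume f: "f \<in> {f\<in>Fam. nv f = n}"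
      have "(\<Prod>p\<in>P. z p ^ f p / fact (f p) * e p) =
            (\<Prod>p\<in>P. (lam (fst p) (snd p) * x) ^ f p / fact (f p) * exp (- lam (fst p) (snd p) * x)) * (\<Prod>p\<in>P. y u p ^ f p)"
        by (simp add: z_def e_def lp_def power_mult_distrib prod.distrib[symmetric] mult_ac)
      also have "(\<Prod>p\<in>P. y u p ^ f p) = Eu u n"
        using exp_nv[of f u] f by (simp add: Eu_def y_def)
      finally show "(\<Prod>p\<in>P. z p ^ f p / fact (f p) * e p) =
          (\<Prod>p\<in>P. (lam (fst p) (snd p) * x) ^ f p / fact (f p) * exp (- lam (fst p) (snd p) * x)) * Eu u n" .
    qed
    also have "\<dots> = mgcp_pmf q k lam x n * Eu u n"
      by (simp add: mgcp_fiber[OF n] sum_distrib_right)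
    finally show ?thesis .
  qed
  have val: "(\<Prod>p\<in>P. exp (z p) * e p) = exp (- phi u * x)"
  proof -
    have "(\<Prod>p\<in>P. exp (z p) * e p) = (\<Prod>p\<in>P. exp (z p - lp p * x))"
      by (simp add: e_def exp_diff exp_minus field_simps)
    also have "\<dots> = exp (\<Sum>p\<in>P. z p - lp p * x)" by (simp add: exp_sum finP)
    also have "(\<Sum>p\<in>P. z p - lp p * x) = - phi u * x"
    proof -
      have "(\<Sum>p\<in>P. z p - lp p * x) = x * (\<Sum>p\<in>P. - (lp p - lp p * y u p))"
        by (simp add: z_def sum_distrib_left algebra_simps)
      also have "\<dots> = - phi u * x" by (simp only: phi_def sum_negf) (simp add: algebra_simps)
      finally show ?thesis .
    qed
    finally show ?thesis .
  qed
  show ?thesis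
    using hs2 unfolding val by (rule has_sum_cong[THEN iffD1, rotated]) (erule eq)
qed

lemma mgcp_nn: "0 \<le> x \<Longrightarrow> 0 \<le> mgcp_pmf q k lam x n"
  unfolding mgcp_pmf_def
proof (intro prod_nonneg sum_nonneg)
  fix i j v assume x: "0 \<le> x" and i: "i \<in> {1..q}" and j: "j \<in> {1..k i}"
  have "0 < lam i j" using lampos i j by auto
  thus "0 \<le> (lam i j * x) ^ v j / fact (v j) * exp (- lam i j * x)" using x by simp
qed

lemma Eu_bounds: assumes u: "\<forall>i. 0 \<le> u i" shows "0 < Eu u n \<and> Eu u n \<le> 1"
proof -
  have "0 \<le> (\<Sum>i=1..q. u i * real (n i))" by (rule sum_nonneg) (simp add: u)
  thus ?thesis by (simp add: Eu_def)
qed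

lemma mgcp_le1:
  assumes x: "0 \<le> x" and n: "n \<in> lattice q"
  shows "mgcp_pmf q k lam x n \<le> 1"
proof -
  have "((\<lambda>n. mgcp_pmf q k lam x n * Eu (\<lambda>_. 0) n) has_sum exp (- phi (\<lambda>_. 0) * x)) (lattice q)"
    by (rule mgcp_Eu_has_sum) (use x in auto)
  hence h: "((\<lambda>n. mgcp_pmf q k lam x n) has_sum 1) (lattice q)"
    by (simp add: Eu0 phi_def y0)
  have "sum (\<lambda>n. mgcp_pmf q k lam x n) {n} \<le> 1"
    by (rule finite_sum_le_has_sum[OF h]) (use n mgcp_nn[OF x] in auto)
  thus ?thesis by simp
qed

lemma lattice_countable: "countable (lattice q)"
proof -
  have "lattice q \<subseteq> (\<lambda>V i. if i \<in> {1..q} then V i else 0) ` PiE {1..q} (\<lambda>_. UNIV :: nat set)"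
  proof
    fix n assume n: "n \<in> lattice q"
    have e: "n = (\<lambda>i. if i \<in> {1..q} then restrict n {1..q} i else 0)"
      using n by (auto simp: lattice_def fun_eq_iff)
    show "n \<in> (\<lambda>V i. if i \<in> {1..q} then V i else 0) ` PiE {1..q} (\<lambda>_. UNIV :: nat set)"
      by (rule image_eqI[where x="restrict n {1..q}" and f="\<lambda>V i. if i \<in> {1..q} then V i else 0", OF e]) simp
  qed
  moreover have "countable (PiE {1..q} (\<lambda>_. UNIV :: nat set))" by (rule countable_PiE) auto
  ultimately show ?thesis by (rule countable_subset[OF _ countable_image])
qed

lemma lattice_infinite: assumes "q \<ge> 1" shows "infinite (lattice q)"
proof -
  have "inj (\<lambda>m::nat. \<lambda>i::nat. if i = 1 then m else (0::nat))" by (auto simp: inj_def fun_eq_iff)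
  hence inf: "infinite (range (\<lambda>m::nat. \<lambda>i::nat. if i = 1 then m else (0::nat)))" by (rule range_inj_infinite)
  have sub: "range (\<lambda>m::nat. \<lambda>i::nat. if i = 1 then m else (0::nat)) \<subseteq> lattice q"
    using assms by (auto simp: lattice_def)
  show ?thesis by (rule infinite_super[OF sub inf])
qed

lemma mgcp_meas: "(\<lambda>x. mgcp_pmf q k lam x n) \<in> borel_measurable borel"
  unfolding mgcp_pmf_def by measurable

end

locale mgs3 = mgs2 +
  fixes mu :: "real \<Rightarrow> real measure"
  assumes q1: "q \<ge> 1"
  assumes mu: "\<forall>t\<ge>0. prob_space (mu t) \<and> sets (mu t) = sets borel \<and> (AE x in mu t. 0 \<le> x) \<and>
           (\<forall>s\<ge>0. (\<integral>x. exp (- s * x) \<partial>(mu t)) = exp (- t * ((s + \<theta>) powr \<alpha> - \<theta> powr \<alpha>)))"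
begin

lemma laplace:
  assumes t: "t \<ge> 0" and u: "\<forall>i. 0 \<le> u i"
  shows "((\<lambda>n. subord_pmf q k lam mu t n * Eu u n) has_sum exp (- t * ((phi u + \<theta>) powr \<alpha> - \<theta> powr \<alpha>))) (lattice q)"
proof -
  have ps: "prob_space (mu t)" and st: "sets (mu t) = sets borel" and ae: "AE x in mu t. 0 \<le> x"
    and lap: "\<And>s. s \<ge> 0 \<Longrightarrow> (\<integral>x. exp (- s * x) \<partial>(mu t)) = exp (- t * ((s + \<theta>) powr \<alpha> - \<theta> powr \<alpha>))"
    using mu t by auto
  interpret prob_space "mu t" by (rule ps)
  have bm: "borel_measurable (mu t) = borel_measurable borel"
    by (rule measurable_cong_sets[OF st refl])
  have gm: "(\<lambda>x. mgcp_pmf q k lam x n * Eu u n) \<in> borel_measurable (mu t)" for n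
    unfolding bm using mgcp_meas by measurable
  have gi: "integrable (mu t) (\<lambda>x. mgcp_pmf q k lam x n * Eu u n)" if n: "n \<in> lattice q" for n
  proof (rule integrable_const_bound[where B=1])
    show "AE x in mu t. norm (mgcp_pmf q k lam x n * Eu u n) \<le> 1"
      using ae
    proof eventually_elim
      case (elim x)
      have "0 \<le> mgcp_pmf q k lam x n" "mgcp_pmf q k lam x n \<le> 1" "0 < Eu u n" "Eu u n \<le> 1"
        using mgcp_nn[OF elim] mgcp_le1[OF elim n] Eu_bounds[OF u] by auto
      thus ?case by (simp add: abs_mult mult_le_one)
    qed
  qed (rule gm)
  have Gm: "(\<lambda>x. exp (- phi u * x)) \<in> borel_measurable (mu t)" unfolding bm by measurable
  have Gi: "integrable (mu t) (\<lambda>x. exp (- phi u * x))"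
  proof (rule integrable_const_bound[where B=1])
    show "AE x in mu t. norm (exp (- phi u * x)) \<le> 1"
      using ae by eventually_elim (use phi_nn[OF u] in \<open>simp add: mult_nonneg_nonneg\<close>)
  qed (rule Gm)
  have "((\<lambda>n. integral\<^sup>L (mu t) (\<lambda>x. mgcp_pmf q k lam x n * Eu u n)) has_sum
          integral\<^sup>L (mu t) (\<lambda>x. exp (- phi u * x))) (lattice q)"
  proof (rule has_sum_integral_nonneg[OF lattice_countable lattice_infinite[OF q1]])
    show "\<And>n. n \<in> lattice q \<Longrightarrow> integrable (mu t) (\<lambda>x. mgcp_pmf q k lam x n * Eu u n)" by (rule gi)
    show "AE x in mu t. 0 \<le> mgcp_pmf q k lam x n * Eu u n" for n
      using ae
    proof eventually_elim
      case (elim x)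
      have "0 \<le> mgcp_pmf q k lam x n" "0 < Eu u n" using mgcp_nn[OF elim] Eu_bounds[OF u] by auto
      thus ?case by simp
    qed
    show "AE x in mu t. ((\<lambda>n. mgcp_pmf q k lam x n * Eu u n) has_sum exp (- phi u * x)) (lattice q)"
      using ae by eventually_elim (rule mgcp_Eu_has_sum[OF u])
    show "integrable (mu t) (\<lambda>x. exp (- phi u * x))" by (rule Gi)
  qed
  thus ?thesis using lap[OF phi_nn[OF u]] by (simp add: subord_pmf_def)
qed

end


context mgs2 begin

lemma K_pos: "K > 0"
proof -
  have "Gamma (1 - \<alpha>) > 0" using a1 by (intro Gamma_real_pos) simp
  moreover have "c powr \<alpha> > 0" using c_pos by simp
  ultimately show ?thesis using a0 by (simp add: K_def)
qed

lemma w0_nn: "0 \<le> w0 n"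
proof (cases "n \<in> lattice q \<and> n \<noteq> (\<lambda>_. 0)")
  case True
  have "0 \<le> Sn n" unfolding Sn_fiber[OF conjunct1[OF True]]
  proof (rule sum_nonneg)
    fix f assume f: "f \<in> {f\<in>Fam. nv f = n}"
    hence "sum f P \<noteq> 0" using True nv_zero_iff by auto
    hence "sum f P \<ge> 1" by simp
    hence "real (sum f P) \<ge> 1" by (simp only: of_nat_le_iff[symmetric, of 1] of_nat_1)
    hence g: "Gamma (real (sum f P) - \<alpha>) > 0" using a1 by (intro Gamma_real_pos) simp
    have "(\<Prod>p\<in>P. (lp p / c) ^ f p / fact (f p)) \<ge> 0"
    proof (rule prod_nonneg)
      fix p assume "p \<in> P" thus "0 \<le> (lp p / c) ^ f p / fact (f p)" using lp_pos[of p] c_pos by simp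
    qed
    thus "0 \<le> Ta f" using g by (simp add: Ta_def)
  qed
  thus ?thesis using K_pos True by (simp add: w0_def)
next
  case False
  hence "w0 n = 0" unfolding w0_def by (simp only: if_False)
  thus ?thesis by simp
qed

lemma w0_supp: "w0 n \<noteq> 0 \<Longrightarrow> n \<in> lattice q \<and> n \<noteq> (\<lambda>_. 0)"
  by (auto simp: w0_def split: if_splits)

lemma w0_hasU: "(w0 has_sum K * (Gamma (-\<alpha>) * ((1 - L / c) powr \<alpha> - 1))) UNIV"
  using w0_has_sum by (rule has_sum_cong_neutral[THEN iffD1, rotated -1]) (auto simp: w0_def)

lemma final_eq:
  "(\<Sum>\<^sub>\<infinity>n\<in>{n\<in>lattice q. \<forall>i\<in>{1..q}. n i \<in> A i}. w0 n) =
        \<alpha> * (total_rate q k lam + \<theta>) powr \<alpha> / Gamma (1 - \<alpha>) *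
        (\<Sum>\<^sub>\<infinity>n\<in>{n\<in>lattice q. n \<noteq> (\<lambda>_. 0)}.
           \<Sum>v\<in>OmegaFam q k n.
             Gamma (real (\<Sum>i=1..q. \<Sum>j=1..k i. v i j) - \<alpha>) *
             (\<Prod>i=1..q. \<Prod>j=1..k i.
                (lam i j / (total_rate q k lam + \<theta>)) ^ (v i j) / fact (v i j)) *
             (if \<forall>i\<in>{1..q}. n i \<in> A i then 1 else 0))"
proof -
  define ind where "ind n = (if \<forall>i\<in>{1..q}. n i \<in> A i then 1 else (0::real))" for n :: "nat \<Rightarrow> nat"
  have inner: "(\<Sum>v\<in>OmegaFam q k n.
             Gamma (real (\<Sum>i=1..q. \<Sum>j=1..k i. v i j) - \<alpha>) *
             (\<Prod>i=1..q. \<Prod>j=1..k i.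
                (lam i j / (total_rate q k lam + \<theta>)) ^ (v i j) / fact (v i j)) *
             (if \<forall>i\<in>{1..q}. n i \<in> A i then 1 else 0)) = Sn n * ind n" for n
    unfolding Sn_def c_def L_def ind_def by (simp add: sum_distrib_right)
  have "\<alpha> * (total_rate q k lam + \<theta>) powr \<alpha> / Gamma (1 - \<alpha>) *
        (\<Sum>\<^sub>\<infinity>n\<in>{n\<in>lattice q. n \<noteq> (\<lambda>_. 0)}. Sn n * ind n)
      = (\<Sum>\<^sub>\<infinity>n\<in>{n\<in>lattice q. n \<noteq> (\<lambda>_. 0)}. K * (Sn n * ind n))"
    unfolding K_def c_def L_def by (rule infsum_cmult_right'[symmetric])
  also have "\<dots> = (\<Sum>\<^sub>\<infinity>n\<in>{n\<in>lattice q. \<forall>i\<in>{1..q}. n i \<in> A i}. w0 n)"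
    by (rule infsum_cong_neutral) (auto simp: w0_def ind_def)
  finally show ?thesis unfolding inner by simp
qed

end

context mgs3 begin

lemma infsum_one_minus:
  fixes v :: "(nat \<Rightarrow> nat) \<Rightarrow> real"
  assumes vn: "\<forall>n. 0 \<le> v n" and vs: "v summable_on UNIV" and u: "\<forall>i. 0 \<le> u i"
  shows "(\<lambda>n. Eu u n * v n) summable_on UNIV"
    and "(\<Sum>\<^sub>\<infinity>n. (1 - Eu u n) * v n) = (\<Sum>\<^sub>\<infinity>n. v n) - (\<Sum>\<^sub>\<infinity>n. Eu u n * v n)"
proof -
  show s2: "(\<lambda>n. Eu u n * v n) summable_on UNIV"
  proof (rule summable_on_comparison_test[OF vs])
    fix n
    have "0 < Eu u n" "Eu u n \<le> 1" using Eu_bounds[OF u] by auto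
    thus "Eu u n * v n \<le> v n" "0 \<le> Eu u n * v n" using vn by (auto intro: mult_left_le_one_le)
  qed
  have "((\<lambda>n. v n + -1 * (Eu u n * v n)) has_sum ((\<Sum>\<^sub>\<infinity>n. v n) + -1 * (\<Sum>\<^sub>\<infinity>n. Eu u n * v n))) UNIV"
    by (intro has_sum_add has_sum_cmult_right has_sum_infsum vs s2)
  moreover have "(\<lambda>n. v n + -1 * (Eu u n * v n)) = (\<lambda>n. (1 - Eu u n) * v n)" by (auto simp: fun_eq_iff algebra_simps)
  ultimately show "(\<Sum>\<^sub>\<infinity>n. (1 - Eu u n) * v n) = (\<Sum>\<^sub>\<infinity>n. v n) - (\<Sum>\<^sub>\<infinity>n. Eu u n * v n)"
    by (simp add: infsumI)
qed

lemma levy_w0: "is_levy_measure q (subord_pmf q k lam mu) w0"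
  unfolding is_levy_measure_def Eu_def[symmetric]
proof (intro conjI allI impI)
  show "0 \<le> w0 n" for n by (rule w0_nn)
  show "w0 n \<noteq> 0 \<Longrightarrow> n \<in> lattice q" "w0 n \<noteq> 0 \<Longrightarrow> n \<noteq> (\<lambda>_. 0)" for n using w0_supp by auto
  show "w0 summable_on UNIV" using w0_hasU by (rule has_sum_imp_summable)
  fix t :: real and u :: "nat \<Rightarrow> real" assume t: "0 \<le> t" and u: "\<forall>i. 0 \<le> u i"
  show "(\<Sum>\<^sub>\<infinity>n\<in>lattice q. subord_pmf q k lam mu t n * Eu u n) = exp (- t * (\<Sum>\<^sub>\<infinity>n. (1 - Eu u n) * w0 n))"
    using infsumI[OF laplace[OF t u]] infsumI[OF psi_has_sum[OF u]] by simp
qed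

lemma Lset_lattice: "Lset {1..q} = lattice q" by (simp add: Lset_def lattice_def)

lemma unique:
  assumes lw: "is_levy_measure q (subord_pmf q k lam mu) w"
  shows "w = w0"
proof -
  have wnn: "\<forall>n. 0 \<le> w n" and wsupp: "\<And>n. w n \<noteq> 0 \<Longrightarrow> n \<in> lattice q \<and> n \<noteq> (\<lambda>_. 0)"
    and ws: "w summable_on UNIV"
    and wlap: "\<And>t u. t \<ge> 0 \<Longrightarrow> \<forall>i. 0 \<le> u i \<Longrightarrow>
        (\<Sum>\<^sub>\<infinity>n\<in>lattice q. subord_pmf q k lam mu t n * Eu u n) = exp (- t * (\<Sum>\<^sub>\<infinity>n. (1 - Eu u n) * w n))"
    using lw unfolding is_levy_measure_def Eu_def[symmetric] by blast+
  have w0s: "w0 summable_on UNIV" using w0_hasU by (rule has_sum_imp_summable)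
  have w0nn: "\<forall>n. 0 \<le> w0 n" using w0_nn by simp
  have psi_eq: "(\<Sum>\<^sub>\<infinity>n. (1 - Eu u n) * w n) = (\<Sum>\<^sub>\<infinity>n. (1 - Eu u n) * w0 n)" if u: "\<forall>i. 0 \<le> u i" for u
  proof -
    have "exp (- 1 * (\<Sum>\<^sub>\<infinity>n. (1 - Eu u n) * w n)) = exp (- 1 * ((phi u + \<theta>) powr \<alpha> - \<theta> powr \<alpha>))"
      using wlap[of 1 u] u infsumI[OF laplace[of 1 u]] by simp
    thus ?thesis using infsumI[OF psi_has_sum[OF u]] by simp
  qed
  define C where "C = (\<Sum>\<^sub>\<infinity>n. w n) - (\<Sum>\<^sub>\<infinity>n. w0 n)"
  have EC: "(\<Sum>\<^sub>\<infinity>n. Eu u n * w n) - (\<Sum>\<^sub>\<infinity>n. Eu u n * w0 n) = C" if u: "\<forall>i. 0 \<le> u i" for u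
    using psi_eq[OF u] infsum_one_minus(2)[OF wnn ws u] infsum_one_minus(2)[OF w0nn w0s u]
    by (simp add: C_def)
  define d where "d n = w n - w0 n - (if n = (\<lambda>_. 0) then C else 0)" for n
  have dhs: "((\<lambda>n. d n * Eu u n) has_sum 0) (lattice q)" if u: "\<forall>i. 0 \<le> u i" for u
  proof -
    have h1: "((\<lambda>n. Eu u n * w n) has_sum (\<Sum>\<^sub>\<infinity>n. Eu u n * w n)) (lattice q)"
      using has_sum_infsum[OF infsum_one_minus(1)[OF wnn ws u]]
      by (rule has_sum_cong_neutral[THEN iffD1, rotated -1]) (use wsupp in auto)
    have h2: "((\<lambda>n. Eu u n * w0 n) has_sum (\<Sum>\<^sub>\<infinity>n. Eu u n * w0 n)) (lattice q)"
      using has_sum_infsum[OF infsum_one_minus(1)[OF w0nn w0s u]]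
      by (rule has_sum_cong_neutral[THEN iffD1, rotated -1]) (use w0_supp in auto)
    have z: "(\<lambda>_. 0::nat) \<in> lattice q" by (simp add: lattice_def)
    have h3: "((\<lambda>n. (if n = (\<lambda>_. 0) then C else 0) * Eu u n) has_sum C) (lattice q)"
    proof -
      have "((\<lambda>n. (if n = (\<lambda>_. 0) then C else 0) * Eu u n) has_sum C) {\<lambda>_. 0}"
        by (rule has_sum_finiteI) (simp_all add: Eu_def)
      thus ?thesis by (rule has_sum_cong_neutral[THEN iffD1, rotated -1]) (use z in auto)
    qed
    have "((\<lambda>n. Eu u n * w n + (-1 * (Eu u n * w0 n) + -1 * ((if n = (\<lambda>_. 0) then C else 0) * Eu u n))) has_sum
        ((\<Sum>\<^sub>\<infinity>n. Eu u n * w n) + (-1 * (\<Sum>\<^sub>\<infinity>n. Eu u n * w0 n) + -1 * C))) (lattice q)"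
      by (intro has_sum_add has_sum_cmult_right h1 h2 h3)
    moreover have "(\<Sum>\<^sub>\<infinity>n. Eu u n * w n) + (-1 * (\<Sum>\<^sub>\<infinity>n. Eu u n * w0 n) + -1 * C) = 0"
      using EC[OF u] by simp
    moreover have "(\<lambda>n. Eu u n * w n + (-1 * (Eu u n * w0 n) + -1 * ((if n = (\<lambda>_. 0) then C else 0) * Eu u n)))
        = (\<lambda>n. d n * Eu u n)" by (auto simp: fun_eq_iff d_def algebra_simps)
    ultimately show ?thesis by simp
  qed
  have dzero: "\<forall>n\<in>Lset {1..q}. d n = 0"
  proof (rule mv_unique)
    show "finite {1..q}" by simp
    have "((\<lambda>n. d n * Eu (\<lambda>_. 0) n) has_sum 0) (lattice q)" by (rule dhs) simp
    thus "d summable_on Lset {1..q}" unfolding Lset_lattice Eu0 by (auto simp: summable_on_def)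
    fix z :: "nat \<Rightarrow> real" assume z: "\<forall>i\<in>{1..q}. 0 < z i \<and> z i < 1"
    define u where "u i = (if i \<in> {1..q} then - ln (z i) else 0)" for i
    have u: "\<forall>i. 0 \<le> u i" using z by (auto simp: u_def intro: less_imp_le)
    have Ez: "Eu u n = (\<Prod>i\<in>{1..q}. z i ^ n i)" for n
    proof -
      have "Eu u n = exp (\<Sum>i=1..q. real (n i) * ln (z i))"
        unfolding Eu_def by (simp add: u_def sum_negf[symmetric] mult.commute)
      also have "\<dots> = (\<Prod>i=1..q. exp (real (n i) * ln (z i)))" by (simp add: exp_sum)
      also have "\<dots> = (\<Prod>i\<in>{1..q}. z i ^ n i)"
        by (intro prod.cong refl) (use z in \<open>simp add: exp_of_nat_mult\<close>)
      finally show ?thesis .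
    qed
    show "(\<Sum>\<^sub>\<infinity>n\<in>Lset {1..q}. d n * (\<Prod>i\<in>{1..q}. z i ^ n i)) = 0"
      using infsumI[OF dhs[OF u]] unfolding Lset_lattice Ez by simp
  qed
  show ?thesis
  proof
    fix n
    show "w n = w0 n"
    proof (cases "n \<in> lattice q \<and> n \<noteq> (\<lambda>_. 0)")
      case True
      thus ?thesis using dzero Lset_lattice by (auto simp: d_def)
    next
      case False
      hence "w n = 0" "w0 n = 0" using wsupp[of n] w0_supp[of n] by blast+
      thus ?thesis by simp
    qed
  qed
qed

end

theorem mainTheorem14:
  fixes q :: nat and k :: "nat \<Rightarrow> nat" and lam :: "nat \<Rightarrow> nat \<Rightarrow> real"
    and \<alpha> \<theta> :: real and mu :: "real \<Rightarrow> real measure"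
  assumes "q \<ge> 1"
    and "\<forall>i\<in>{1..q}. k i \<ge> 1"
    and "\<forall>i\<in>{1..q}. \<forall>j\<in>{1..k i}. lam i j > 0"
    and "0 < \<alpha>" and "\<alpha> < 1" and "\<theta> > 0"
    and "\<forall>t\<ge>0. prob_space (mu t) \<and> sets (mu t) = sets borel \<and> (AE x in mu t. 0 \<le> x) \<and>
           (\<forall>s\<ge>0. (\<integral>x. exp (- s * x) \<partial>(mu t)) = exp (- t * ((s + \<theta>) powr \<alpha> - \<theta> powr \<alpha>)))"
  shows "(\<exists>w. is_levy_measure q (subord_pmf q k lam mu) w) \<and>
    (\<forall>w. is_levy_measure q (subord_pmf q k lam mu) w \<longrightarrow>
      (\<forall>A :: nat \<Rightarrow> nat set.
        (\<Sum>\<^sub>\<infinity>n\<in>{n\<in>lattice q. \<forall>i\<in>{1..q}. n i \<in> A i}. w n) =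
        \<alpha> * (total_rate q k lam + \<theta>) powr \<alpha> / Gamma (1 - \<alpha>) *
        (\<Sum>\<^sub>\<infinity>n\<in>{n\<in>lattice q. n \<noteq> (\<lambda>_. 0)}.
           \<Sum>v\<in>OmegaFam q k n.
             Gamma (real (\<Sum>i=1..q. \<Sum>j=1..k i. v i j) - \<alpha>) *
             (\<Prod>i=1..q. \<Prod>j=1..k i.
                (lam i j / (total_rate q k lam + \<theta>)) ^ (v i j) / fact (v i j)) *
             (if \<forall>i\<in>{1..q}. n i \<in> A i then 1 else 0))))"
proof -
  interpret mgs3 q k lam \<alpha> \<theta> mu
    by unfold_locales (use assms in auto)
  show ?thesis
  proof (intro conjI allI impI)
    show "\<exists>w. is_levy_measure q (subord_pmf q k lam mu) w" using levy_w0 by blast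
    fix w A assume "is_levy_measure q (subord_pmf q k lam mu) w"
    hence "w = w0" by (rule unique)
    thus "(\<Sum>\<^sub>\<infinity>n\<in>{n\<in>lattice q. \<forall>i\<in>{1..q}. n i \<in> A i}. w n) =
        \<alpha> * (total_rate q k lam + \<theta>) powr \<alpha> / Gamma (1 - \<alpha>) *
        (\<Sum>\<^sub>\<infinity>n\<in>{n\<in>lattice q. n \<noteq> (\<lambda>_. 0)}.
           \<Sum>v\<in>OmegaFam q k n.
             Gamma (real (\<Sum>i=1..q. \<Sum>j=1..k i. v i j) - \<alpha>) *
             (\<Prod>i=1..q. \<Prod>j=1..k i.
                (lam i j / (total_rate q k lam + \<theta>)) ^ (v i j) / fact (v i j)) *
             (if \<forall>i\<in>{1..q}. n i \<in> A i then 1 else 0))"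
      using final_eq by simp
  qed
qed


end
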